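(* Let $Q(z)\not\equiv0$ be a $k\times k$ Hermite matrix of Laurent polynomials that is diagonally dominant and satisfies $\operatorname{len}(Q_{1,1})\le\dots\le\operatorname{len}(Q_{k,k})$. Let $b(z)$ be a column vector of $k$ Laurent polynomials such that $\operatorname{ldeg}(b_\ell)\ge\operatorname{ldeg}(Q_{\ell,\ell})$ for every $\ell$ with $b_\ell\not\equiv0$. Then there exists a column vector $X(z)$ of $k$ Laurent polynomials such that $Y(z):=b(z)-Q(z)X(z)$ satisfies, for all $\ell=1,\dots,k$, $$\operatorname{fs}(Y_\ell)\subsetneq\operatorname{fs}(Q_{\ell,\ell})\quad\text{and}\quad\deg(Y_\ell)<\deg(Q_{\ell,\ell}).$$
   Context: For a matrix $U(z)=\sum_kU_kz^k$ of Laurent polynomials, $U^\star(z):=\sum_k\overline{U_k}^Tz^{-k}$; Hermite means $Q^\star=Q$. For a Laurent polynomial $u\not\equiv0$: $\deg(u)$ is its highest degree, $\operatorname{ldeg}(u)$ its lowest degree, $\operatorname{len}(u):=\deg(u)-\operatorname{ldeg}(u)$, $\operatorname{fs}(u):=[\operatorname{ldeg}(u),\deg(u)]$; for $u\equiv0$, $\operatorname{len}(u)=\deg(u):=-\infty$ and $\operatorname{fs}(u):=\emptyset$. A $k\times k$ matrix $Q$ of Laurent polynomials is diagonally dominant at the diagonal entry $s$ if (1) for all $i\ne s$: $\operatorname{fs}(Q_{i,s})\subsetneq\operatorname{fs}(Q_{s,s})$ and $\operatorname{fs}(Q_{s,i})\subsetneq\operatorname{fs}(Q_{s,s})$; (2)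 for all $i>s$: $\deg(Q_{s,i})<\deg(Q_{s,s})$. $Q$ is diagonally dominant if this holds at every diagonal entry. *)

theory Defs
  imports Complex_Main "HOL-Library.Poly_Mapping" "HOL-Library.Extended_Real"
begin

text \<open>Laurent polynomials over the complex numbers: finitely supported maps
  from the exponent (an integer) to the coefficient; multiplication is convolution.\<close>
type_synonym lpoly = "int \<Rightarrow>\<^sub>0 complex"

definition lstar :: "lpoly \<Rightarrow> lpoly" where
  "lstar u = Abs_poly_mapping (\<lambda>n. cnj (Poly_Mapping.lookup u (- n)))"

definition ldeg_hi :: "lpoly \<Rightarrow> ereal" where
  "ldeg_hi u = (if u = 0 then -\<infinity> else ereal (of_int (Max (Poly_Mapping.keys u))))"

text \<open>Lowest degree (only meaningful for nonzero u).\<close>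
definition ldeg_lo :: "lpoly \<Rightarrow> int" where
  "ldeg_lo u = Min (Poly_Mapping.keys u)"

definition llen :: "lpoly \<Rightarrow> ereal" where
  "llen u = (if u = 0 then -\<infinity> else ereal (of_int (Max (Poly_Mapping.keys u) - Min (Poly_Mapping.keys u))))"

definition lfs :: "lpoly \<Rightarrow> int set" where
  "lfs u = (if u = 0 then {} else {Min (Poly_Mapping.keys u) .. Max (Poly_Mapping.keys u)})"

text \<open>k x k matrices and vectors are indexed by 0..k-1.\<close>
definition hermite :: "nat \<Rightarrow> (nat \<Rightarrow> nat \<Rightarrow> lpoly) \<Rightarrow> bool" where
  "hermite k Q \<longleftrightarrow> (\<forall>i<k. \<forall>j<k. lstar (Q j i) = Q i j)"

definition diag_dominant_at :: "nat \<Rightarrow> (nat \<Rightarrow> nat \<Rightarrow> lpoly) \<Rightarrow> nat \<Rightarrow> bool" where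
  "diag_dominant_at k Q s \<longleftrightarrow>
     (\<forall>i<k. i \<noteq> s \<longrightarrow> lfs (Q i s) \<subset> lfs (Q s s) \<and> lfs (Q s i) \<subset> lfs (Q s s)) \<and>
     (\<forall>i<k. s < i \<longrightarrow> ldeg_hi (Q s i) < ldeg_hi (Q s s))"

definition diag_dominant :: "nat \<Rightarrow> (nat \<Rightarrow> nat \<Rightarrow> lpoly) \<Rightarrow> bool" where
  "diag_dominant k Q \<longleftrightarrow> (\<forall>s<k. diag_dominant_at k Q s)"

definition mat_vec :: "nat \<Rightarrow> (nat \<Rightarrow> nat \<Rightarrow> lpoly) \<Rightarrow> (nat \<Rightarrow> lpoly) \<Rightarrow> nat \<Rightarrow> lpoly" where
  "mat_vec k Q X l = (\<Sum>j<k. Q l j * X j)"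

end

theory Submission imports Defs begin
lemma lookup_mult_single_int:
  fixes p :: lpoly
  shows "Poly_Mapping.lookup (p * Poly_Mapping.single e c) n = Poly_Mapping.lookup p (n - e) * c"
proof -
  have "Poly_Mapping.lookup (p * Poly_Mapping.single e c) n =
     Sum_any (\<lambda>l. Poly_Mapping.lookup p l * Sum_any (\<lambda>q. Poly_Mapping.lookup (Poly_Mapping.single e c) q when n = l + q))"
    by (rule lookup_mult)
  also have "\<dots> = Sum_any (\<lambda>l. Poly_Mapping.lookup p l * (c when l = n - e))"
  proof (intro arg_cong[where f=Sum_any] ext)
    fix l
    have "Sum_any (\<lambda>q. Poly_Mapping.lookup (Poly_Mapping.single e c) q when n = l + q)
        = Sum_any (\<lambda>q. (c when q = e) when n = l + q)"
      by (intro arg_cong[where f=Sum_any] ext) (auto simp: lookup_single when_def)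
    also have "\<dots> = Sum_any (\<lambda>q. (if l = n - e then c else 0) when q = e)"
      by (intro arg_cong[where f=Sum_any] ext) (auto simp: when_def)
    also have "\<dots> = (c when l = n - e)" by (simp add: when_def)
    finally show "Poly_Mapping.lookup p l * Sum_any (\<lambda>q. Poly_Mapping.lookup (Poly_Mapping.single e c) q when n = l + q) = Poly_Mapping.lookup p l * (c when l = n - e)" by simp
  qed
  also have "\<dots> = Sum_any (\<lambda>l. (Poly_Mapping.lookup p l * c when l = n - e))"
    by (simp add: mult_when)
  also have "\<dots> = Poly_Mapping.lookup p (n - e) * c" by simp
  finally show ?thesis .
qed
lemma keys_mult_single_int:
  fixes p :: lpoly
  shows "Poly_Mapping.keys (p * Poly_Mapping.single e c) \<subseteq> (\<lambda>x. x + e) ` Poly_Mapping.keys p"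
  using keys_mult[of p "Poly_Mapping.single e c"] by (auto split: if_splits)

lemma keys_lfs_sub:
  fixes p q :: lpoly
  assumes "lfs p \<subset> lfs q" "q \<noteq> 0"
  shows "Poly_Mapping.keys p \<subseteq> {Min (Poly_Mapping.keys q)..Max (Poly_Mapping.keys q)}"
proof
  fix x assume x: "x \<in> Poly_Mapping.keys p"
  then have "p \<noteq> 0" by auto
  have "x \<in> {Min (Poly_Mapping.keys p)..Max (Poly_Mapping.keys p)}"
    using x by (simp add: Min_le Max_ge)
  then show "x \<in> {Min (Poly_Mapping.keys q)..Max (Poly_Mapping.keys q)}"
    using assms \<open>p \<noteq> 0\<close> unfolding lfs_def by auto
qed

lemma keys_hi_sub:
  fixes p q :: lpoly
  assumes "ldeg_hi p < ldeg_hi q" "q \<noteq> 0"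
  shows "Poly_Mapping.keys p \<subseteq> {..<Max (Poly_Mapping.keys q)}"
proof
  fix x assume x: "x \<in> Poly_Mapping.keys p"
  then have "p \<noteq> 0" by auto
  have "x \<le> Max (Poly_Mapping.keys p)" using x by (simp add: Max_ge)
  moreover have "Max (Poly_Mapping.keys p) < Max (Poly_Mapping.keys q)"
    using assms \<open>p \<noteq> 0\<close> unfolding ldeg_hi_def by auto
  ultimately show "x \<in> {..<Max (Poly_Mapping.keys q)}" by simp
qed

lemma final_ok:
  fixes y q :: lpoly
  assumes "q \<noteq> 0" "Poly_Mapping.keys y \<subseteq> {Min (Poly_Mapping.keys q)..<Max (Poly_Mapping.keys q)}"
  shows "lfs y \<subset> lfs q \<and> ldeg_hi y < ldeg_hi q"
proof (cases "y = 0")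
  case True
  have "Min (Poly_Mapping.keys q) \<le> Max (Poly_Mapping.keys q)"
    using assms(1) Min_le[OF finite_keys Max_in[OF finite_keys]] by simp
  then show ?thesis using True assms(1) unfolding lfs_def ldeg_hi_def by auto
next
  case False
  have ne: "Poly_Mapping.keys y \<noteq> {}" using False by simp
  have a: "Min (Poly_Mapping.keys q) \<le> Min (Poly_Mapping.keys y)"
    using assms(2) Min_in[OF finite_keys ne] by auto
  have b: "Max (Poly_Mapping.keys y) < Max (Poly_Mapping.keys q)"
    using assms(2) Max_in[OF finite_keys ne] by auto
  have e1: "lfs y = {Min (Poly_Mapping.keys y)..Max (Poly_Mapping.keys y)}" using False by (simp add: lfs_def)
  have e2: "lfs q = {Min (Poly_Mapping.keys q)..Max (Poly_Mapping.keys q)}" using assms(1) by (simp add: lfs_def)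
  have s1: "lfs y \<subseteq> lfs q" unfolding e1 e2 using a b by auto
  have mq: "Min (Poly_Mapping.keys q) \<le> Max (Poly_Mapping.keys q)"
    using Min_le[OF finite_keys Max_in[OF finite_keys]] assms(1) by simp
  have s2a: "Max (Poly_Mapping.keys q) \<in> lfs q" unfolding e2 atLeastAtMost_iff using mq by linarith
  have s2b: "Max (Poly_Mapping.keys q) \<notin> lfs y" unfolding e1 atLeastAtMost_iff using b by linarith
  have s2: "Max (Poly_Mapping.keys q) \<in> lfs q - lfs y" using s2a s2b by blast
  have "lfs y \<subset> lfs q" using s1 s2 by blast
  moreover have "ldeg_hi y < ldeg_hi q" using False assms(1) b by (simp add: ldeg_hi_def)
  ultimately show ?thesis by blast
qed

lemma mat_vec_add:
  "mat_vec k Q (\<lambda>j. X1 j + X2 j) i = mat_vec k Q X1 i + mat_vec k Q X2 i"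
  by (simp add: mat_vec_def distrib_left sum.distrib)

lemma mat_vec_zero: "mat_vec k Q (\<lambda>j. 0) i = 0"
  by (simp add: mat_vec_def)

lemma mat_vec_single:
  assumes "l < k"
  shows "mat_vec k Q (\<lambda>j. if j = l then s else 0) i = Q i l * s"
  using assms by (simp add: mat_vec_def if_distrib cong: if_cong)

theorem lemmaA1:
  fixes k :: nat and Q :: "nat \<Rightarrow> nat \<Rightarrow> lpoly" and b :: "nat \<Rightarrow> lpoly"
  assumes nonzero: "\<exists>i<k. \<exists>j<k. Q i j \<noteq> 0"
    and herm: "hermite k Q"
    and dd: "diag_dominant k Q"
    and len_mono: "\<forall>i<k. \<forall>j<k. i \<le> j \<longrightarrow> llen (Q i i) \<le> llen (Q j j)"
    and b_ldeg: "\<forall>l<k. b l \<noteq> 0 \<longrightarrow> ldeg_lo (b l) \<ge> ldeg_lo (Q l l)"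
  shows "\<exists>X :: nat \<Rightarrow> lpoly. \<forall>l<k.
           lfs (b l - mat_vec k Q X l) \<subset> lfs (Q l l) \<and>
           ldeg_hi (b l - mat_vec k Q X l) < ldeg_hi (Q l l)"
proof -
  define D where "D i = Max (Poly_Mapping.keys (Q i i))" for i
  define L where "L i = Min (Poly_Mapping.keys (Q i i))" for i
  define M where "M X i = mat_vec k Q X i" for X i
  have F1: "Q i i \<noteq> 0" if "i < k" for i
  proof (cases "\<exists>j<k. j \<noteq> i")
    case True
    then obtain j where j: "j < k" "j \<noteq> i" by auto
    have "lfs (Q j i) \<subset> lfs (Q i i)"
      using dd that j unfolding diag_dominant_def diag_dominant_at_def by blast
    then have "lfs (Q i i) \<noteq> {}" by auto
    then show ?thesis unfolding lfs_def by auto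
  next
    case False
    then show ?thesis using nonzero by (metis)
  qed
  have F2: "Poly_Mapping.keys (Q i l) \<subseteq> {L i..D i}" if "i < k" "l < k" for i l
  proof (cases "l = i")
    case True
    then show ?thesis unfolding L_def D_def by (auto simp: Min_le Max_ge)
  next
    case False
    have "lfs (Q i l) \<subset> lfs (Q i i)"
      using dd that False unfolding diag_dominant_def diag_dominant_at_def by blast
    then show ?thesis using keys_lfs_sub F1[OF that(1)] unfolding L_def D_def by blast
  qed
  have F3: "Poly_Mapping.keys (Q i l) \<subseteq> {..<D i}" if "i < k" "l < k" "i < l" for i l
  proof -
    have "ldeg_hi (Q i l) < ldeg_hi (Q i i)"
      using dd that unfolding diag_dominant_def diag_dominant_at_def by blast
    then show ?thesis using keys_hi_sub F1[OF that(1)] unfolding D_def by blast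
  qed
  have F4: "Poly_Mapping.lookup (Q l l) (D l) \<noteq> 0" if "l < k" for l
  proof -
    have "Poly_Mapping.keys (Q l l) \<noteq> {}" using F1[OF that] by simp
    then have "D l \<in> Poly_Mapping.keys (Q l l)" unfolding D_def by (rule Max_in[OF finite_keys])
    then show ?thesis by (simp add: in_keys_iff)
  qed
  define inv where "inv e l Y \<longleftrightarrow> (\<forall>i<k. Poly_Mapping.keys (Y i) \<subseteq> {L i..D i + e}) \<and>
     (\<forall>i<l. Poly_Mapping.keys (Y i) \<subseteq> {..<D i + e})" for e :: int and l and Y :: "nat \<Rightarrow> lpoly"
  have step: "\<exists>X. inv e (Suc l) (\<lambda>i. Y i - M X i)"
    if "inv e l Y" "l < k" "0 \<le> e" for e l Y
  proof -
    define c where "c = Poly_Mapping.lookup (Y l) (D l + e) / Poly_Mapping.lookup (Q l l) (D l)"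
    define X where "X = (\<lambda>j. if j = l then Poly_Mapping.single e c else 0)"
    have MX: "M X i = Q i l * Poly_Mapping.single e c" for i
      unfolding M_def X_def using mat_vec_single[OF that(2)] by blast
    have K: "Poly_Mapping.keys (Y i - M X i) \<subseteq> Poly_Mapping.keys (Y i) \<union> (\<lambda>x. x + e) ` Poly_Mapping.keys (Q i l)" for i
      using keys_diff[of "Y i" "M X i"] keys_mult_single_int[of "Q i l" e c] unfolding MX by blast
    have A: "Poly_Mapping.keys (Y i - M X i) \<subseteq> {L i..D i + e}" if "i < k" for i
    proof -
      have "(\<lambda>x. x + e) ` Poly_Mapping.keys (Q i l) \<subseteq> {L i..D i + e}"
        using F2[OF that \<open>l < k\<close>] \<open>0 \<le> e\<close> by auto
      moreover have "Poly_Mapping.keys (Y i) \<subseteq> {L i..D i + e}"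
        using \<open>inv e l Y\<close> that unfolding inv_def by simp
      ultimately show ?thesis using K[of i] by (metis Un_least subset_trans)
    qed
    have B: "Poly_Mapping.keys (Y i - M X i) \<subseteq> {..<D i + e}" if "i < Suc l" for i
    proof (cases "i = l")
      case True
      have "Poly_Mapping.lookup (Y l - M X l) (D l + e) = 0"
        using F4[OF \<open>l < k\<close>] unfolding MX lookup_minus lookup_mult_single_int c_def by simp
      then have nk: "D l + e \<notin> Poly_Mapping.keys (Y l - M X l)" by (simp add: in_keys_iff)
      show ?thesis unfolding True
      proof
        fix x assume "x \<in> Poly_Mapping.keys (Y l - M X l)"
        then have "x \<le> D l + e" "x \<noteq> D l + e" using A[OF \<open>l < k\<close>] nk by auto
        then show "x \<in> {..<D l + e}" by simp
      qed
    next
      case False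
      then have il: "i < l" using that by simp
      have "(\<lambda>x. x + e) ` Poly_Mapping.keys (Q i l) \<subseteq> {..<D i + e}"
        using F3[OF _ \<open>l < k\<close> il] il \<open>l < k\<close> by auto
      moreover have "Poly_Mapping.keys (Y i) \<subseteq> {..<D i + e}"
        using \<open>inv e l Y\<close> il unfolding inv_def by simp
      ultimately show ?thesis using K[of i] by (metis Un_least subset_trans)
    qed
    show ?thesis using A B unfolding inv_def by blast
  qed
  have loop: "\<forall>l Y. inv e l Y \<and> l + n = k \<longrightarrow> (\<exists>X. inv e k (\<lambda>i. Y i - M X i))"
    if "0 \<le> e" for e n
  proof (induction n)
    case 0
    show ?case
    proof (intro allI impI)
      fix l Y assume "inv e l Y \<and> l + 0 = k"
      then have "inv e k (\<lambda>i. Y i - M (\<lambda>j. 0) i)" by (auto simp add: M_def mat_vec_zero)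
      then show "\<exists>X. inv e k (\<lambda>i. Y i - M X i)" by blast
    qed
  next
    case (Suc n)
    show ?case
    proof (intro allI impI)
      fix l Y assume h: "inv e l Y \<and> l + Suc n = k"
      then obtain X1 where X1: "inv e (Suc l) (\<lambda>i. Y i - M X1 i)"
        using step[of e l Y] \<open>0 \<le> e\<close> by auto
      then obtain X2 where X2: "inv e k (\<lambda>i. (Y i - M X1 i) - M X2 i)"
        using Suc.IH h by (metis add_Suc_shift)
      have "(\<lambda>i. (Y i - M X1 i) - M X2 i) = (\<lambda>i. Y i - M (\<lambda>j. X1 j + X2 j) i)"
        by (simp add: M_def mat_vec_add algebra_simps)
      then show "\<exists>X. inv e k (\<lambda>i. Y i - M X i)" using X2 by metis
    qed
  qed
  have outer: "\<forall>Y :: nat \<Rightarrow> lpoly. (\<forall>i<k. Poly_Mapping.keys (Y i) \<subseteq> {L i..D i + int n - 1}) \<longrightarrow>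
      (\<exists>X. \<forall>i<k. Poly_Mapping.keys (Y i - M X i) \<subseteq> {L i..<D i})" for n
  proof (induction n)
    case 0
    show ?case
    proof (intro allI impI)
      fix Y :: "nat \<Rightarrow> lpoly" assume h: "\<forall>i<k. Poly_Mapping.keys (Y i) \<subseteq> {L i..D i + int 0 - 1}"
      have "\<forall>i<k. Poly_Mapping.keys (Y i - M (\<lambda>j. 0) i) \<subseteq> {L i..<D i}"
      proof (intro allI impI subsetI)
        fix i x assume i: "i < k" and x: "x \<in> Poly_Mapping.keys (Y i - M (\<lambda>j. 0) i)"
        have x': "x \<in> Poly_Mapping.keys (Y i)" using x by (simp add: M_def mat_vec_zero)
        have "Poly_Mapping.keys (Y i) \<subseteq> {L i..D i + int 0 - 1}" using h i by blast
        then have "x \<in> {L i..D i + int 0 - 1}" using x' by blast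
        then show "x \<in> {L i..<D i}" by simp
      qed
      then show "\<exists>X. \<forall>i<k. Poly_Mapping.keys (Y i - M X i) \<subseteq> {L i..<D i}" by blast
    qed
  next
    case (Suc n)
    show ?case
    proof (intro allI impI)
      fix Y :: "nat \<Rightarrow> lpoly" assume h: "\<forall>i<k. Poly_Mapping.keys (Y i) \<subseteq> {L i..D i + int (Suc n) - 1}"
      then have "inv (int n) 0 Y" unfolding inv_def by auto
      then obtain X1 where X1: "inv (int n) k (\<lambda>i. Y i - M X1 i)"
        using loop[of "int n" k] by auto
      then have "\<forall>i<k. Poly_Mapping.keys (Y i - M X1 i) \<subseteq> {L i..D i + int n - 1}"
        unfolding inv_def by fastforce
      then obtain X2 where X2: "\<forall>i<k. Poly_Mapping.keys ((Y i - M X1 i) - M X2 i) \<subseteq> {L i..<D i}"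
        using Suc.IH[rule_format, of "\<lambda>i. Y i - M X1 i"] by blast
      have eq: "(Y i - M X1 i) - M X2 i = Y i - M (\<lambda>j. X1 j + X2 j) i" for i
        by (simp add: M_def mat_vec_add algebra_simps)
      have "\<forall>i<k. Poly_Mapping.keys (Y i - M (\<lambda>j. X1 j + X2 j) i) \<subseteq> {L i..<D i}"
        using X2 unfolding eq .
      then show "\<exists>X. \<forall>i<k. Poly_Mapping.keys (Y i - M X i) \<subseteq> {L i..<D i}" by blast
    qed
  qed
  define n0 where "n0 = (\<Sum>i<k. nat (Max (Poly_Mapping.keys (b i) \<union> {D i}) - D i + 1))"
  have init: "\<forall>i<k. Poly_Mapping.keys (b i) \<subseteq> {L i..D i + int n0 - 1}"
  proof (intro allI impI subsetI)
    fix i x assume i: "i < k" and x: "x \<in> Poly_Mapping.keys (b i)"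
    then have "b i \<noteq> 0" by auto
    have "L i \<le> x" using b_ldeg i \<open>b i \<noteq> 0\<close> x Min_le[OF finite_keys x]
      unfolding L_def ldeg_lo_def by fastforce
    have m: "x \<le> Max (Poly_Mapping.keys (b i) \<union> {D i})" using x by (simp add: Max_ge)
    have "nat (Max (Poly_Mapping.keys (b i) \<union> {D i}) - D i + 1) \<le> n0"
      unfolding n0_def using i by (intro member_le_sum) auto
    then have "x \<le> D i + int n0 - 1" using m by linarith
    then show "x \<in> {L i..D i + int n0 - 1}" using \<open>L i \<le> x\<close> by simp
  qed
  obtain X where X: "\<forall>i<k. Poly_Mapping.keys (b i - M X i) \<subseteq> {L i..<D i}"
    using outer[of n0] init by blast
  show ?thesis
  proof (intro exI allI impI)
    fix l assume l: "l < k"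
    show "lfs (b l - mat_vec k Q X l) \<subset> lfs (Q l l) \<and> ldeg_hi (b l - mat_vec k Q X l) < ldeg_hi (Q l l)"
      using final_ok[OF F1[OF l]] X l unfolding M_def L_def D_def by blast
  qed
qed

end
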